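(* Let $\mathbf X\in\mathbb R^{N\times d}$ (rows $x_1^T,\dots,x_N^T$) with $\mathbf X^T\mathbf X=\mathbf V\mathbf S\mathbf V^T$ positive definite, $\mathbf S=\mathrm{diag}(s_1,\dots,s_d)$, $s_{\min}=\min_i s_i$, and let $\mathbf y\in\mathbb R^N$. Let $0<\eta\le1/\|\mathbf X^T\mathbf X\|_{\mathrm{op}}$ and define the gradient descent iterates $w_0=0$, $w_t=w_{t-1}+\eta\mathbf X^T(\mathbf y-\mathbf Xw_{t-1})$, so $w_t=\mathbf V\mathbf S^{-1}(\mathbf I-(\mathbf I-\eta\mathbf S)^t)\mathbf V^T\mathbf X^T\mathbf y$. For $\lambda=\frac1{t\eta}$ let $\widetilde w_\lambda=(\mathbf X^T\mathbf X+\lambda\mathbf I)^{-1}\mathbf X^T\mathbf y$. Let $f_t(x)=w_t^Tx$, $\widetilde f_\lambda(x)=\widetilde w_\lambda^Tx$, and $c(t,\eta)=\min\big(0.25,\frac1{s_{\min}^2t^2\eta^2}\big)$. Then $$\sum_{i=1}^N(f_t(x_i)-\widetilde f_\lambda(x_i))^2\le c(t,\eta)\sum_{i=1}^N f_t(x_i)^2,$$ and, for a distribution $\mathcal D_{\mathcal X}$ on $\mathbb R^d$ with positive definite second-moment matrix $\Sigma=\mathbb E_{x\sim\mathcal D_{\mathcal X}}[xx^T]$ of condition number $\kappa$, $$\mathbb E_{x\sim\mathcal D_{\mathcal X}}\big[(f_t(x)-\widetilde f_\lambda(x))^2\big]\le\kappa\, c(t,\eta)\,\mathbb E_{x\sim\mathcal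 D_{\mathcal X}}\big[f_t(x)^2\big].$$
   Context: $t\ge1$ is an integer. $\|\cdot\|_{\mathrm{op}}$ is the operator norm; $\kappa$ is the ratio of largest to smallest eigenvalue of $\Sigma$. *)

theory Defs
  imports "HOL-Analysis.Analysis" "HOL-Probability.Probability"
begin

definition diag_mat :: "(real ^ 'd) \<Rightarrow> real ^ 'd ^ 'd" where
  "diag_mat s = (\<chi> i j. if i = j then s $ i else 0)"

definition pos_def :: "real ^ 'd ^ 'd \<Rightarrow> bool" where
  "pos_def A \<longleftrightarrow> (\<forall>v. v \<noteq> 0 \<longrightarrow> v \<bullet> (A *v v) > 0)"

definition mat_eigenvalues :: "real ^ 'd ^ 'd \<Rightarrow> real set" where
  "mat_eigenvalues A = {\<mu>. \<exists>v. v \<noteq> 0 \<and> A *v v = \<mu> *\<^sub>R v}"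

definition cond_number :: "real ^ 'd ^ 'd \<Rightarrow> real" where
  "cond_number A = Max (mat_eigenvalues A) / Min (mat_eigenvalues A)"

fun gd_iter :: "real ^ 'd ^ 'n \<Rightarrow> real ^ 'n \<Rightarrow> real \<Rightarrow> nat \<Rightarrow> real ^ 'd" where
  "gd_iter X y \<eta> 0 = 0"
| "gd_iter X y \<eta> (Suc t) =
     gd_iter X y \<eta> t + \<eta> *\<^sub>R (transpose X *v (y - X *v gd_iter X y \<eta> t))"

definition ridge :: "real ^ 'd ^ 'n \<Rightarrow> real ^ 'n \<Rightarrow> real \<Rightarrow> real ^ 'd" where
  "ridge X y lam = matrix_inv (transpose X ** X + lam *\<^sub>R mat 1) *v (transpose X *v y)"

end

theory Submission imports Defs begin

lemma diag_mult: "diag_mat s *v z = (\<chi> j. s$j * z$j)"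
  by (simp add: diag_mat_def matrix_vector_mult_def vec_eq_iff if_distrib if_distribR cong: if_cong)

lemma inner_transpose: "(u::real^'m) \<bullet> (transpose X *v v) = (X *v u) \<bullet> v"
  by (metis dot_lmul_matrix inner_commute transpose_matrix_vector)

lemma inner_vec_sum: "(u::real^'m) \<bullet> v = (\<Sum>i\<in>UNIV. u$i * v$i)"
  by (simp add: inner_vec_def)

lemma sum_rows: "(\<Sum>i\<in>UNIV. (w \<bullet> X $ i)\<^sup>2) = w \<bullet> ((transpose X ** X) *v (w::real^'d))"
proof -
  have "w \<bullet> ((transpose X ** X) *v w) = (X *v w) \<bullet> (X *v w)"
    by (simp add: inner_transpose matrix_vector_mul_assoc[symmetric] del: transpose_matrix_vector)
  also have "\<dots> = (\<Sum>i\<in>UNIV. (w \<bullet> X $ i)\<^sup>2)"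
    by (simp add: inner_vec_sum matrix_vector_mul_component power2_eq_square mult.commute)
  finally show ?thesis by simp
qed

lemma orth_VtV: "orthogonal_matrix V \<Longrightarrow> transpose V ** V = mat 1"
  by (simp add: orthogonal_matrix_def)
lemma orth_VVt: "orthogonal_matrix V \<Longrightarrow> V ** transpose V = mat 1"
  by (simp add: orthogonal_matrix_def)

lemma quad_eig:
  assumes "orthogonal_matrix (V::real^'d^'d)"
  shows "w \<bullet> ((V ** diag_mat s ** transpose V) *v w) = (\<Sum>j\<in>UNIV. s$j * ((transpose V *v w)$j)\<^sup>2)"
proof -
  have "w \<bullet> ((V ** diag_mat s ** transpose V) *v w) = w \<bullet> (transpose (transpose V) *v (diag_mat s *v (transpose V *v w)))"
    by (simp add: matrix_vector_mul_assoc matrix_mul_assoc del: transpose_matrix_vector)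
  also have "\<dots> = (transpose V *v w) \<bullet> (diag_mat s *v (transpose V *v w))"
    by (rule inner_transpose)
  finally show ?thesis by (simp add: inner_vec_sum diag_mult power2_eq_square mult_ac)
qed

lemma norm_eig:
  assumes "orthogonal_matrix (V::real^'d^'d)"
  shows "(norm w)\<^sup>2 = (\<Sum>j\<in>UNIV. ((transpose V *v w)$j)\<^sup>2)"
proof -
  have "(norm w)\<^sup>2 = w \<bullet> w" by (simp add: dot_square_norm)
  also have "\<dots> = w \<bullet> (transpose (transpose V) *v (transpose V *v w))"
    using assms by (simp add: matrix_vector_mul_assoc orth_VVt del: transpose_matrix_vector)
  also have "\<dots> = (transpose V *v w) \<bullet> (transpose V *v w)" by (rule inner_transpose)
  finally show ?thesis by (simp add: inner_vec_sum power2_eq_square)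
qed

lemma ext_eig:
  fixes A :: "real^'d^'d"
  assumes sym: "transpose A = A" and v1: "v \<bullet> v = 1"
    and mx: "\<And>u. u \<bullet> (A *v u) \<le> \<mu> * (u \<bullet> u)" and vm: "v \<bullet> (A *v v) = \<mu>"
  shows "A *v v = \<mu> *\<^sub>R v"
proof (rule ccontr)
  assume ne: "A *v v \<noteq> \<mu> *\<^sub>R v"
  define r where "r = A *v v - \<mu> *\<^sub>R v"
  have rne: "r \<noteq> 0" using ne by (simp add: r_def)
  have symi: "\<And>a b. a \<bullet> (A *v b) = (A *v a) \<bullet> b"
    by (metis inner_transpose sym)
  have "v \<bullet> r = v \<bullet> (A *v v) - \<mu> * (v \<bullet> v)" by (simp add: r_def inner_diff_right)
  hence vr: "v \<bullet> r = 0" using vm v1 by simp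
  have Av: "A *v v = r + \<mu> *\<^sub>R v" by (simp add: r_def)
  have rAv: "r \<bullet> (A *v v) = r \<bullet> r"
    unfolding Av using vr by (simp add: inner_add_right inner_commute)
  define rr where "rr = r \<bullet> r"
  define K where "K = r \<bullet> (A *v r) - \<mu> * rr"
  have rrpos: "rr > 0" using rne by (simp add: rr_def)
  define e where "e = rr / (\<bar>K\<bar> + 1)"
  have epos: "e > 0" using rrpos by (simp add: e_def)
  have eK: "e * \<bar>K\<bar> < rr"
    using rrpos by (simp add: e_def field_simps)
  have m: "(v + e *\<^sub>R r) \<bullet> (A *v (v + e *\<^sub>R r)) \<le> \<mu> * ((v + e *\<^sub>R r) \<bullet> (v + e *\<^sub>R r))"
    by (rule mx)
  have e1: "(v + e *\<^sub>R r) \<bullet> (A *v (v + e *\<^sub>R r)) = \<mu> + 2 * e * rr + e^2 * (r \<bullet> (A *v r))"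
    using vm rAv symi[of v r]
    by (simp add: algebra_simps inner_add_left inner_add_right power2_eq_square rr_def inner_commute)
  have e2: "(v + e *\<^sub>R r) \<bullet> (v + e *\<^sub>R r) = 1 + e^2 * rr"
    using v1 vr by (simp add: algebra_simps inner_add_left inner_add_right power2_eq_square rr_def inner_commute)
  have "\<mu> + 2 * e * rr + e^2 * (r \<bullet> (A *v r)) \<le> \<mu> * (1 + e^2 * rr)"
    using m unfolding e1 e2 .
  hence "2 * e * rr + e^2 * K \<le> 0"
    by (simp add: K_def algebra_simps)
  have k1: "e * (- \<bar>K\<bar>) \<le> e * K" using epos by (intro mult_left_mono) auto
  have k2: "e * (e * (- \<bar>K\<bar>)) \<le> e * (e * K)" using epos k1 by (intro mult_left_mono) auto
  have k3: "e * (e * \<bar>K\<bar>) < e * rr" using eK epos by simp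
  have k4: "e * rr > 0" using epos rrpos by simp
  have "e^2 * K = e * (e * K)" by (simp add: power2_eq_square)
  moreover have "2 * e * rr = 2 * (e * rr)" by simp
  ultimately show False using k2 k3 k4 \<open>2 * e * rr + e^2 * K \<le> 0\<close> by linarith
qed


lemma neg_mv: "(- A) *v (u::real^'d) = - (A *v u)"
  by (simp add: vec_eq_iff matrix_vector_mult_def sum_negf)

lemma neg_tr: "transpose (- (A::real^'d^'d)) = - transpose A"
  by (simp add: vec_eq_iff transpose_def)

lemma sphere_ne: "sphere (0::real^'d) 1 \<noteq> {}"
proof -
  obtain k :: 'd where True by simp
  have "axis k (1::real) \<in> sphere 0 1" by simp
  thus ?thesis by blast
qed

lemma cont_quad: "continuous_on S (\<lambda>u::real^'d. u \<bullet> (A *v u))"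
  by (intro continuous_intros continuous_on_id linear_continuous_on) auto

lemma homog:
  assumes "\<And>v. v \<in> sphere (0::real^'d) 1 \<Longrightarrow> v \<bullet> (A *v v) \<le> l"
  shows "u \<bullet> (A *v u) \<le> l * (u \<bullet> u)"
proof (cases "u = 0")
  case True thus ?thesis by simp
next
  case False
  define v where "v = (1 / norm u) *\<^sub>R u"
  have "v \<in> sphere 0 1" using False by (simp add: v_def)
  hence "v \<bullet> (A *v v) \<le> l" by (rule assms)
  moreover have "v \<bullet> (A *v v) = (u \<bullet> (A *v u)) / (norm u)^2"
    by (simp add: v_def matrix_vector_mult_scaleR power2_eq_square)
  moreover have "u \<bullet> u = (norm u)^2" by (simp add: dot_square_norm)
  moreover have "(norm u)^2 > 0" using False by simp
  ultimately show ?thesis by (simp add: divide_le_eq mult.commute)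
qed

lemma sym_max:
  fixes A :: "real^'d^'d"
  assumes sym: "transpose A = A"
  shows "\<exists>l\<in>mat_eigenvalues A. \<forall>u. u \<bullet> (A *v u) \<le> l * (u \<bullet> u)"
proof -
  obtain v where v: "v \<in> sphere 0 1" and mx: "\<And>y. y \<in> sphere 0 1 \<Longrightarrow> y \<bullet> (A *v y) \<le> v \<bullet> (A *v v)"
    using continuous_attains_sup[OF compact_sphere sphere_ne cont_quad] by blast
  define l where "l = v \<bullet> (A *v v)"
  have all: "\<And>u. u \<bullet> (A *v u) \<le> l * (u \<bullet> u)"
    using homog[of A l] mx unfolding l_def by blast
  have v1: "v \<bullet> v = 1" using v by (simp add: dot_square_norm)
  have "A *v v = l *\<^sub>R v" by (rule ext_eig[OF sym v1 all]) (simp add: l_def)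
  moreover have "v \<noteq> 0" using v by auto
  ultimately have "l \<in> mat_eigenvalues A" unfolding mat_eigenvalues_def by blast
  thus ?thesis using all by blast
qed

lemma sym_min:
  fixes A :: "real^'d^'d"
  assumes sym: "transpose A = A"
  shows "\<exists>l\<in>mat_eigenvalues A. \<forall>u. l * (u \<bullet> u) \<le> u \<bullet> (A *v u)"
proof -
  have "transpose (- A) = - A" using sym by (simp add: neg_tr)
  from sym_max[OF this] obtain l where l: "l \<in> mat_eigenvalues (- A)"
    and all: "\<forall>u. u \<bullet> ((- A) *v u) \<le> l * (u \<bullet> u)" by blast
  from l obtain v where "v \<noteq> 0" "(- A) *v v = l *\<^sub>R v" unfolding mat_eigenvalues_def by blast
  hence "A *v v = (- l) *\<^sub>R v" by (simp add: neg_mv) (metis minus_minus scaleR_minus_left)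
  hence "- l \<in> mat_eigenvalues A" using \<open>v \<noteq> 0\<close> unfolding mat_eigenvalues_def by blast
  moreover have "\<forall>u. (- l) * (u \<bullet> u) \<le> u \<bullet> (A *v u)"
  proof
    fix u from all have "- (u \<bullet> (A *v u)) \<le> l * (u \<bullet> u)" by (simp add: neg_mv)
    thus "(- l) * (u \<bullet> u) \<le> u \<bullet> (A *v u)" by linarith
  qed
  ultimately show ?thesis by blast
qed

lemma sym_finite:
  fixes A :: "real^'d^'d"
  assumes sym: "transpose A = A"
  shows "finite (mat_eigenvalues A)"
proof -
  define E where "E = mat_eigenvalues A"
  define ev where "ev \<mu> = (SOME v. v \<noteq> 0 \<and> A *v v = \<mu> *\<^sub>R v)" for \<mu>
  have ev: "ev \<mu> \<noteq> 0 \<and> A *v ev \<mu> = \<mu> *\<^sub>R ev \<mu>" if "\<mu> \<in> E" for \<mu>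
  proof -
    have "\<exists>v. v \<noteq> 0 \<and> A *v v = \<mu> *\<^sub>R v" using that unfolding E_def mat_eigenvalues_def by blast
    thus ?thesis unfolding ev_def by (rule someI_ex)
  qed
  have symi: "\<And>a b. a \<bullet> (A *v b) = (A *v a) \<bullet> b"
    by (metis inner_transpose sym)
  have inj: "inj_on ev E"
  proof (rule inj_onI)
    fix x y assume "x \<in> E" "y \<in> E" "ev x = ev y"
    hence "x *\<^sub>R ev x = y *\<^sub>R ev x" "ev x \<noteq> 0" using ev by metis+
    thus "x = y" by simp
  qed
  have "pairwise orthogonal (ev ` E)"
  proof (rule pairwiseI, clarify)
    fix x y assume xy: "x \<in> E" "y \<in> E" "ev x \<noteq> ev y"
    hence "x \<noteq> y" by auto
    have "x * (ev x \<bullet> ev y) = (A *v ev x) \<bullet> ev y" using ev[OF xy(1)] by simp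
    also have "\<dots> = ev x \<bullet> (A *v ev y)" by (simp add: symi)
    also have "\<dots> = y * (ev x \<bullet> ev y)" using ev[OF xy(2)] by simp
    finally have "(x - y) * (ev x \<bullet> ev y) = 0" by (simp add: algebra_simps)
    thus "orthogonal (ev x) (ev y)" using \<open>x \<noteq> y\<close> by (simp add: orthogonal_def)
  qed
  moreover have "0 \<notin> ev ` E" using ev by auto
  ultimately have "independent (ev ` E)" by (rule pairwise_orthogonal_independent)
  hence "finite (ev ` E)" by (rule independent_imp_finite)
  thus ?thesis using inj finite_imageD unfolding E_def by blast
qed

lemma coord_bound:
  fixes s \<eta> smin b z z' :: real and t :: nat
  assumes sp: "s > 0" and ep: "\<eta> > 0" and x1: "\<eta> * s \<le> 1" and t1: "t \<ge> 1"
    and smp: "smin > 0" and sms: "smin \<le> s"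
    and hz: "s * z = (1 - (1 - \<eta> * s)^t) * b"
    and hz': "(s + 1 / (real t * \<eta>)) * z' = b"
  shows "(z - z')\<^sup>2 \<le> min (1/4) (1 / (smin\<^sup>2 * (real t)\<^sup>2 * \<eta>\<^sup>2)) * z\<^sup>2"
proof -
  define x where "x = \<eta> * s"
  define T where "T = real t"
  define q where "q = 1 - x"
  define p where "p = 1 - q^t"
  define L where "L = 1 / (T * \<eta>)"
  have xp: "x > 0" using sp ep by (simp add: x_def)
  have x1': "x \<le> 1" using x1 by (simp add: x_def)
  have T1: "T \<ge> 1" using t1 by (simp add: T_def)
  have q0: "q \<ge> 0" "q < 1" using xp x1' by (auto simp: q_def)
  have Lp: "L > 0" using T1 ep by (simp add: L_def)
  have qt: "q^t \<le> q" using q0 t1 power_decreasing[of 1 t q] by simp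
  have pp: "p > 0" using qt q0 by (simp add: p_def)
  have p1: "p \<le> 1" using q0 by (simp add: p_def)
  have bern1: "1 + T * x \<le> (1 + x)^t"
    using Bernoulli_inequality[of x t] xp by (simp add: T_def)
  have "q^t * (1 + x)^t = (1 - x^2)^t"
    by (simp add: q_def power_mult_distrib[symmetric] power2_eq_square algebra_simps)
  also have "\<dots> \<le> 1" using xp x1' by (intro power_le_one) (auto simp: power2_eq_square mult_le_one)
  finally have B0: "q^t * (1 + x)^t \<le> 1" .
  have B1: "q^t * (1 + T * x) \<le> 1"
  proof -
    have "q^t * (1 + T * x) \<le> q^t * (1 + x)^t" using bern1 q0 by (intro mult_left_mono) auto
    thus ?thesis using B0 by linarith
  qed
  have B2: "p \<le> T * x"
    using Bernoulli_inequality[of "-x" t] x1' by (simp add: p_def q_def T_def)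
  have sL: "s + L = (1 + T * x) / (T * \<eta>)"
    using T1 ep by (simp add: L_def x_def field_simps)
  define P where "P = p * (s + L)"
  have Ppos: "P > 0" using pp sp Lp by (simp add: P_def)
  have PgeS: "P \<ge> s"
  proof -
    have "p * (1 + T * x) \<ge> T * x" using B1 by (simp add: p_def algebra_simps)
    hence "p * (1 + T * x) / (T * \<eta>) \<ge> T * x / (T * \<eta>)" using T1 ep
      by (intro divide_right_mono) auto
    thus ?thesis using T1 ep by (simp add: P_def sL x_def)
  qed
  have PleSL: "P \<le> s + L" using p1 sp Lp by (simp add: P_def mult_left_le_one_le)
  define r where "r = 1 - s / P"
  have zeq: "z = p * b / s" using hz sp by (simp add: p_def q_def x_def field_simps)
  have "(s + L) * z' = b" using hz' by (simp add: L_def T_def)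
  hence z'eq: "z' = b / (s + L)" using sp Lp by (simp add: eq_divide_eq mult.commute)
  have diff: "z - z' = r * z"
  proof -
    have n1: "s + L \<noteq> 0" "p * (s + L) \<noteq> 0" "s \<noteq> 0" "p \<noteq> 0" using sp pp Lp by auto
    have a1: "r * z = p*b/s - (s/P)*(p*b/s)" unfolding r_def zeq by (simp only: left_diff_distrib mult_1_left)
    have a2: "(s/P)*(p*b/s) = b/(s+L)" using n1 by (simp add: P_def field_simps)
    show ?thesis using a1 a2 by (simp add: zeq z'eq)
  qed
  have r0: "r \<ge> 0" using PgeS Ppos by (simp add: r_def)
  have rA: "r \<le> L / (s + L)"
  proof -
    have "s / (s + L) \<le> s / P" using Ppos PleSL sp by (intro divide_left_mono) auto
    thus ?thesis using sp Lp by (simp add: r_def field_simps)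
  qed
  have rB: "r \<le> 1 / (T * x)"
  proof -
    have "L / (s + L) \<le> L / s" using sp Lp by (intro divide_left_mono) auto
    also have "L / s = 1 / (T * x)" using sp ep by (simp add: L_def x_def)
    finally show ?thesis using rA by simp
  qed
  have rC: "r \<le> 1/2"
  proof (cases "T * x \<ge> 1")
    case True
    have "L = s / (T * x)" using sp ep by (simp add: L_def x_def field_simps)
    also have "\<dots> \<le> s" using True sp by (simp add: divide_le_eq)
    finally have "L \<le> s" .
    hence "L / (s + L) \<le> 1/2" using sp Lp by (simp add: field_simps)
    thus ?thesis using rA by linarith
  next
    case False
    have "P \<le> T * x * (s + L)" using B2 sp Lp by (simp add: P_def mult_right_mono)
    also have "\<dots> = T * x * s + s" using sp ep T1 by (simp add: L_def x_def field_simps)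
    also have "\<dots> \<le> 2 * s" proof -
      have "T * x * s \<le> 1 * s" using False sp by (intro mult_right_mono) auto
      thus ?thesis by simp
    qed
    finally have "P \<le> 2 * s" .
    hence "s / P \<ge> 1/2" using Ppos sp by (simp add: field_simps)
    thus ?thesis by (simp add: r_def)
  qed
  have r2a: "r^2 \<le> 1/4"
  proof -
    have "r^2 \<le> (1/2)^2" using r0 rC by (intro power_mono) auto
    thus ?thesis by (simp add: power2_eq_square)
  qed
  have "T * \<eta> * smin \<le> T * x" using T1 ep sms by (simp add: x_def mult.commute)
  hence "1 / (T * x) \<le> 1 / (T * \<eta> * smin)" using T1 ep smp xp by (intro divide_left_mono) auto
  hence "r \<le> 1 / (T * \<eta> * smin)" using rB by simp
  hence r2b: "r^2 \<le> 1 / (smin\<^sup>2 * T\<^sup>2 * \<eta>\<^sup>2)"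
    using r0 power_mono[of r "1 / (T * \<eta> * smin)" 2] by (simp add: power_divide power_mult_distrib mult_ac)
  have "(z - z')^2 = r^2 * z^2" by (simp add: diff power_mult_distrib)
  also have "\<dots> \<le> min (1/4) (1 / (smin\<^sup>2 * T\<^sup>2 * \<eta>\<^sup>2)) * z^2"
    using r2a r2b by (intro mult_right_mono) auto
  finally show ?thesis by (simp add: T_def)
qed


lemma step_alg:
  fixes sj zz bb e Q :: real
  assumes "sj * zz = (1 - Q) * bb"
  shows "sj * zz + e * sj * (bb - sj * zz) = (1 - (1 - e * sj) * Q) * bb"
proof -
  have "sj * zz + e * sj * (bb - sj * zz) = (1 - Q) * bb + e * sj * (bb - (1 - Q) * bb)"
    by (simp only: assms)
  thus ?thesis by (simp add: algebra_simps)
qed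

lemma gd_coord:
  assumes orth: "orthogonal_matrix V"
    and eig: "transpose X ** X = V ** diag_mat s ** transpose V"
  shows "s$j * (transpose V *v gd_iter X y \<eta> t)$j
         = (1 - (1 - \<eta> * s$j)^t) * (transpose V *v (transpose X *v y))$j"
proof (induction t)
  case 0 thus ?case by simp
next
  case (Suc t)
  define w where "w = gd_iter X y \<eta> t"
  define b where "b = transpose V *v (transpose X *v y)"
  have VA: "transpose V *v ((transpose X ** X) *v w) = diag_mat s *v (transpose V *v w)"
    unfolding eig using orth
    by (simp add: matrix_vector_mul_assoc matrix_mul_assoc orth_VtV del: transpose_matrix_vector)
  have "transpose V *v gd_iter X y \<eta> (Suc t) =
        transpose V *v w + \<eta> *\<^sub>R (b - transpose V *v ((transpose X ** X) *v w))"
    by (simp add: w_def b_def matrix_vector_right_distrib matrix_vector_mult_scaleR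
        matrix_vector_mult_diff_distrib matrix_vector_mul_assoc del: transpose_matrix_vector)
  hence "(transpose V *v gd_iter X y \<eta> (Suc t))$j = (transpose V *v w)$j + \<eta> * (b$j - s$j * (transpose V *v w)$j)"
    by (simp add: VA diag_mult del: transpose_matrix_vector)
  hence F: "(transpose V *v gd_iter X y \<eta> (Suc t))$j = (transpose V *v w)$j + \<eta> * (b$j - s$j * (transpose V *v w)$j)" .
  have "s$j * (transpose V *v gd_iter X y \<eta> (Suc t))$j
       = s$j * (transpose V *v w)$j + \<eta> * s$j * (b$j - s$j * (transpose V *v w)$j)"
    by (simp only: F) (simp add: algebra_simps del: transpose_matrix_vector)
  also have "\<dots> = (1 - (1 - \<eta> * s$j)^(Suc t)) * b$j"
    using step_alg[OF Suc.IH[unfolded w_def[symmetric] b_def[symmetric]], of \<eta>]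
    by (simp del: transpose_matrix_vector)
  finally show ?case by (simp add: b_def)
qed

lemma mat_plus_mv: "((A::real^'d^'d) + l *\<^sub>R mat 1) *v v = A *v v + l *\<^sub>R v"
proof -
  have "(l *\<^sub>R mat 1) *v v = l *\<^sub>R v"
    by (simp add: vec_eq_iff matrix_vector_mult_def mat_def if_distrib if_distribR cong: if_cong)
  thus ?thesis by (simp add: matrix_vector_mult_add_rdistrib)
qed

lemma integral_quad:
  fixes D :: "(real^'d) measure"
  assumes mom: "\<And>i j. integrable D (\<lambda>x. x $ i * x $ j)"
  shows "(\<integral>x. (u \<bullet> x)\<^sup>2 \<partial>D) = u \<bullet> ((\<chi> i j. \<integral>x. x $ i * x $ j \<partial>D) *v u)"
proof -
  have eq: "(u \<bullet> x)\<^sup>2 = (\<Sum>i\<in>UNIV. \<Sum>j\<in>UNIV. (u$i * u$j) * (x$i * x$j))" for x :: "real^'d"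
    by (simp add: inner_vec_sum power2_eq_square sum_product mult_ac)
  have "(\<integral>x. (u \<bullet> x)\<^sup>2 \<partial>D) = (\<integral>x. (\<Sum>i\<in>UNIV. \<Sum>j\<in>UNIV. (u$i * u$j) * (x$i * x$j)) \<partial>D)"
    by (simp add: eq)
  also have "\<dots> = (\<Sum>i\<in>UNIV. \<integral>x. (\<Sum>j\<in>UNIV. (u$i * u$j) * (x$i * x$j)) \<partial>D)"
    by (intro Bochner_Integration.integral_sum Bochner_Integration.integrable_sum
        integrable_mult_right mom)
  also have "\<dots> = (\<Sum>i\<in>UNIV. \<Sum>j\<in>UNIV. \<integral>x. (u$i * u$j) * (x$i * x$j) \<partial>D)"
    by (intro sum.cong refl Bochner_Integration.integral_sum integrable_mult_right mom)
  also have "\<dots> = u \<bullet> ((\<chi> i j. \<integral>x. x $ i * x $ j \<partial>D) *v u)"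
    by (simp only: integral_mult_right_zero) (simp add: inner_vec_sum matrix_vector_mult_def sum_distrib_left mult_ac)
  finally show ?thesis .
qed



theorem proposition2:
  fixes X :: "real ^ 'd ^ 'n" and y :: "real ^ 'n"
    and V :: "real ^ 'd ^ 'd" and s :: "real ^ 'd"
    and \<eta> :: real and t :: nat
    and D :: "(real ^ 'd) measure" and \<Sigma> :: "real ^ 'd ^ 'd"
  assumes V_orth: "orthogonal_matrix V"
    and eig: "transpose X ** X = V ** diag_mat s ** transpose V"
    and XtX_pd: "pos_def (transpose X ** X)"
    and eta_pos: "0 < \<eta>"
    and eta_le: "\<eta> \<le> 1 / onorm (\<lambda>v. (transpose X ** X) *v v)"
    and t_ge: "t \<ge> 1"
    and D_prob: "prob_space D"
    and D_sets: "sets D = sets borel"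
    and D_mom: "\<And>i j. integrable D (\<lambda>x. x $ i * x $ j)"
    and Sigma_def: "\<Sigma> = (\<chi> i j. \<integral>x. x $ i * x $ j \<partial>D)"
    and Sigma_pd: "pos_def \<Sigma>"
  shows
    "let w = gd_iter X y \<eta> t;
         lam = 1 / (real t * \<eta>);
         w' = ridge X y lam;
         s_min = Min (range (\<lambda>i. s $ i));
         c = min (1/4) (1 / (s_min\<^sup>2 * (real t)\<^sup>2 * \<eta>\<^sup>2))
     in (\<Sum>i\<in>UNIV. (w \<bullet> X $ i - w' \<bullet> X $ i)\<^sup>2) \<le> c * (\<Sum>i\<in>UNIV. (w \<bullet> X $ i)\<^sup>2)
      \<and> (\<integral>x. (w \<bullet> x - w' \<bullet> x)\<^sup>2 \<partial>D)
          \<le> cond_number \<Sigma> * c * (\<integral>x. (w \<bullet> x)\<^sup>2 \<partial>D)"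
proof -
  define A where "A = transpose X ** X"
  define w where "w = gd_iter X y \<eta> t"
  define lam where "lam = 1 / (real t * \<eta>)"
  define w' where "w' = ridge X y lam"
  define smin where "smin = Min (range (\<lambda>i. s $ i))"
  define c where "c = min (1/4) (1 / (smin\<^sup>2 * (real t)\<^sup>2 * \<eta>\<^sup>2))"
  define b where "b = transpose V *v (transpose X *v y)"
  define z where "z = transpose V *v w"
  define z' where "z' = transpose V *v w'"
  have lampos: "lam > 0" using eta_pos t_ge by (simp add: lam_def)
  have Apd: "\<And>v. v \<noteq> 0 \<Longrightarrow> v \<bullet> (A *v v) > 0" using XtX_pd by (simp add: pos_def_def A_def)
  have VA: "\<And>u. transpose V *v (A *v u) = diag_mat s *v (transpose V *v u)"
    unfolding A_def eig using V_orth
    by (simp add: matrix_vector_mul_assoc matrix_mul_assoc orth_VtV del: transpose_matrix_vector)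
  have seig: "s$j > 0 \<and> \<eta> * s$j \<le> 1" for j
  proof -
    define e where "e = V *v axis j (1::real)"
    have ee: "e \<bullet> e = 1"
    proof -
      have "e \<bullet> e = axis j 1 \<bullet> (transpose V *v e)" by (simp add: e_def inner_transpose del: transpose_matrix_vector)
      also have "\<dots> = 1" using V_orth by (simp add: e_def matrix_vector_mul_assoc orth_VtV del: transpose_matrix_vector)
      finally show ?thesis .
    qed
    have Ae: "A *v e = s$j *\<^sub>R e"
    proof -
      have "A *v e = V *v (diag_mat s *v (transpose V *v e))"
        unfolding A_def eig by (simp add: matrix_vector_mul_assoc matrix_mul_assoc del: transpose_matrix_vector)
      also have "transpose V *v e = axis j 1"
        using V_orth by (simp add: e_def matrix_vector_mul_assoc orth_VtV del: transpose_matrix_vector)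
      also have "diag_mat s *v axis j 1 = s$j *\<^sub>R axis j (1::real)"
        by (simp add: diag_mult vec_eq_iff axis_def)
      finally show ?thesis by (simp add: e_def matrix_vector_mult_scaleR)
    qed
    have ne: "e \<noteq> 0" using ee by auto
    have "e \<bullet> (A *v e) = s$j" using ee by (simp add: Ae)
    hence sp: "s$j > 0" using Apd[OF ne] by simp
    have ne1: "norm e = 1" using ee by (simp add: norm_eq_1)
    have "norm (A *v e) \<le> onorm (\<lambda>v. A *v v) * norm e"
      by (rule onorm) simp
    hence sle: "s$j \<le> onorm (\<lambda>v. A *v v)" using sp ne1 by (simp add: Ae)
    hence op: "onorm (\<lambda>v. A *v v) > 0" using sp by simp
    have "\<eta> * s$j \<le> (1 / onorm (\<lambda>v. A *v v)) * s$j"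
      using eta_le sp by (intro mult_right_mono) (auto simp: A_def)
    also have "\<dots> \<le> 1" using sle op by (simp add: divide_le_eq)
    finally show ?thesis using sp by simp
  qed
  have sminpos: "smin > 0" unfolding smin_def using seig by (subst Min_gr_iff) auto
  have sminle: "smin \<le> s$j" for j unfolding smin_def by (rule Min_le) auto
  have c0: "c \<ge> 0" unfolding c_def by simp
  have hz: "s$j * z$j = (1 - (1 - \<eta> * s$j)^t) * b$j" for j
    using gd_coord[OF V_orth eig] by (simp add: z_def w_def b_def del: transpose_matrix_vector)
  define M where "M = A + lam *\<^sub>R mat 1"
  have Minj: "\<forall>x. M *v x = 0 \<longrightarrow> x = 0"
  proof (intro allI impI, rule ccontr)
    fix x assume Mx: "M *v x = 0" and nx: "x \<noteq> 0"
    have "x \<bullet> (M *v x) = x \<bullet> (A *v x) + lam * (x \<bullet> x)" by (simp add: M_def mat_plus_mv inner_add_right)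
    moreover have "x \<bullet> (A *v x) > 0" using Apd[OF nx] .
    moreover have "x \<bullet> x > 0" using nx by simp
    moreover have "lam * (x \<bullet> x) > 0" using lampos \<open>x \<bullet> x > 0\<close> by simp
    ultimately have "x \<bullet> (M *v x) > 0" by linarith
    thus False using Mx by simp
  qed
  hence "invertible M" by (simp add: invertible_left_inverse matrix_left_invertible_ker)
  hence "\<exists>M'. M ** M' = mat 1 \<and> M' ** M = mat 1" by (simp add: invertible_def)
  hence "M ** matrix_inv M = mat 1 \<and> matrix_inv M ** M = mat 1"
    unfolding matrix_inv_def by (rule someI_ex)
  hence Minv: "M ** matrix_inv M = mat 1" by blast
  have "M *v w' = M *v (matrix_inv M *v (transpose X *v y))"
    by (simp only: w'_def ridge_def M_def A_def)
  also have "\<dots> = (M ** matrix_inv M) *v (transpose X *v y)" by (rule matrix_vector_mul_assoc)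
  finally have Mw': "M *v w' = transpose X *v y" by (simp only: Minv matrix_vector_mul_lid)
  have hz': "(s$j + lam) * z'$j = b$j" for j
  proof -
    have "transpose V *v (M *v w') = b" by (simp add: Mw' b_def del: transpose_matrix_vector)
    moreover have "transpose V *v (M *v w') = diag_mat s *v z' + lam *\<^sub>R z'"
      by (simp add: M_def mat_plus_mv matrix_vector_right_distrib matrix_vector_mult_scaleR VA z'_def
          del: transpose_matrix_vector)
    ultimately have "b$j = s$j * z'$j + lam * z'$j" by (simp add: diag_mult)
    thus ?thesis by (simp add: algebra_simps)
  qed
  have coord: "(z$j - z'$j)\<^sup>2 \<le> c * (z$j)\<^sup>2" for j
    unfolding c_def
    by (rule coord_bound[OF conjunct1[OF seig] eta_pos conjunct2[OF seig] t_ge sminpos sminle hz])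
      (use hz' in \<open>simp add: lam_def\<close>)
  have zd: "transpose V *v (w - w') = z - z'"
    by (simp add: z_def z'_def matrix_vector_mult_diff_distrib del: transpose_matrix_vector)
  have Aeig: "A = V ** diag_mat s ** transpose V" using eig by (simp add: A_def)
  have P1: "(\<Sum>i\<in>UNIV. (w \<bullet> X $ i - w' \<bullet> X $ i)\<^sup>2) \<le> c * (\<Sum>i\<in>UNIV. (w \<bullet> X $ i)\<^sup>2)"
  proof -
    have "(\<Sum>i\<in>UNIV. (w \<bullet> X $ i - w' \<bullet> X $ i)\<^sup>2) = (\<Sum>i\<in>UNIV. ((w - w') \<bullet> X $ i)\<^sup>2)"
      by (simp add: inner_diff_left)
    also have "\<dots> = (w - w') \<bullet> (A *v (w - w'))" by (simp add: sum_rows A_def)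
    also have "\<dots> = (\<Sum>j\<in>UNIV. s$j * ((z - z')$j)\<^sup>2)"
      unfolding Aeig quad_eig[OF V_orth] zd ..
    also have "\<dots> \<le> (\<Sum>j\<in>UNIV. s$j * (c * (z$j)\<^sup>2))"
      using coord seig by (intro sum_mono mult_left_mono) (auto simp: less_imp_le)
    also have "\<dots> = c * (\<Sum>j\<in>UNIV. s$j * (z$j)\<^sup>2)" by (simp add: sum_distrib_left mult_ac)
    also have "(\<Sum>j\<in>UNIV. s$j * (z$j)\<^sup>2) = w \<bullet> (A *v w)"
      unfolding Aeig quad_eig[OF V_orth] z_def ..
    also have "\<dots> = (\<Sum>i\<in>UNIV. (w \<bullet> X $ i)\<^sup>2)" by (simp add: sum_rows A_def)
    finally show ?thesis .
  qed
  have Ssym: "transpose \<Sigma> = \<Sigma>" by (simp add: Sigma_def transpose_def vec_eq_iff mult.commute)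
  define E where "E = mat_eigenvalues \<Sigma>"
  have Efin: "finite E" unfolding E_def by (rule sym_finite[OF Ssym])
  obtain lt where lt: "lt \<in> E" "\<And>u. u \<bullet> (\<Sigma> *v u) \<le> lt * (u \<bullet> u)"
    using sym_max[OF Ssym] unfolding E_def by blast
  obtain lb where lb: "lb \<in> E" "\<And>u. lb * (u \<bullet> u) \<le> u \<bullet> (\<Sigma> *v u)"
    using sym_min[OF Ssym] unfolding E_def by blast
  have Epos: "\<mu> > 0" if "\<mu> \<in> E" for \<mu>
  proof -
    from that obtain v where v: "v \<noteq> 0" "\<Sigma> *v v = \<mu> *\<^sub>R v" unfolding E_def mat_eigenvalues_def by blast
    have "v \<bullet> (\<Sigma> *v v) > 0" using Sigma_pd v(1) by (simp add: pos_def_def)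
    hence "\<mu> * (v \<bullet> v) > 0" using v(2) by simp
    moreover have "v \<bullet> v > 0" using v(1) by simp
    ultimately show ?thesis by (simp add: zero_less_mult_iff)
  qed
  define MaxE where "MaxE = Max E"
  define MinE where "MinE = Min E"
  have MaxE: "lt \<le> MaxE" unfolding MaxE_def using Efin lt(1) by simp
  have MinE: "MinE \<le> lb" unfolding MinE_def using Efin lb(1) by simp
  have MinEpos: "MinE > 0" unfolding MinE_def using Efin lb(1) Epos Min_in by blast
  have ltpos: "lt > 0" using Epos lt(1) by simp
  have cond: "cond_number \<Sigma> = MaxE / MinE" by (simp add: cond_number_def MaxE_def MinE_def E_def)
  have Eq: "\<And>u. (\<integral>x. (u \<bullet> x)\<^sup>2 \<partial>D) = u \<bullet> (\<Sigma> *v u)"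
    unfolding Sigma_def by (rule integral_quad[OF D_mom])
  have nd: "(w - w') \<bullet> (w - w') \<le> c * (w \<bullet> w)"
  proof -
    have "(w - w') \<bullet> (w - w') = (\<Sum>j\<in>UNIV. ((z - z')$j)\<^sup>2)"
      using norm_eig[OF V_orth, of "w - w'"] unfolding zd by (simp add: dot_square_norm del: transpose_matrix_vector)
    also have "\<dots> \<le> (\<Sum>j\<in>UNIV. c * (z$j)\<^sup>2)" using coord by (intro sum_mono) simp
    also have "\<dots> = c * (w \<bullet> w)"
      using norm_eig[OF V_orth, of w] by (simp add: dot_square_norm z_def sum_distrib_left del: transpose_matrix_vector)
    finally show ?thesis .
  qed
  have P2: "(\<integral>x. (w \<bullet> x - w' \<bullet> x)\<^sup>2 \<partial>D) \<le> cond_number \<Sigma> * c * (\<integral>x. (w \<bullet> x)\<^sup>2 \<partial>D)"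
  proof -
    have "(\<integral>x. (w \<bullet> x - w' \<bullet> x)\<^sup>2 \<partial>D) = (\<integral>x. ((w - w') \<bullet> x)\<^sup>2 \<partial>D)"
      by (simp add: inner_diff_left)
    also have "\<dots> = (w - w') \<bullet> (\<Sigma> *v (w - w'))" by (rule Eq)
    also have "\<dots> \<le> lt * ((w - w') \<bullet> (w - w'))" by (rule lt(2))
    also have "\<dots> \<le> lt * (c * (w \<bullet> w))" using nd ltpos by (intro mult_left_mono) auto
    also have "\<dots> \<le> MaxE * (c * (w \<bullet> w))" using MaxE c0 by (intro mult_right_mono) auto
    also have "c * (w \<bullet> w) \<le> c * ((w \<bullet> (\<Sigma> *v w)) / MinE)"
    proof -
      have "MinE * (w \<bullet> w) \<le> lb * (w \<bullet> w)" using MinE by (intro mult_right_mono) auto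
      also have "\<dots> \<le> w \<bullet> (\<Sigma> *v w)" by (rule lb(2))
      finally have "w \<bullet> w \<le> (w \<bullet> (\<Sigma> *v w)) / MinE" using MinEpos by (simp add: le_divide_eq mult.commute)
      thus ?thesis using c0 by (intro mult_left_mono) auto
    qed
    hence "MaxE * (c * (w \<bullet> w)) \<le> MaxE * (c * ((w \<bullet> (\<Sigma> *v w)) / MinE))"
      by (rule mult_left_mono) (use MaxE ltpos in linarith)
    also have "\<dots> = cond_number \<Sigma> * c * (\<integral>x. (w \<bullet> x)\<^sup>2 \<partial>D)"
      by (simp add: cond Eq)
    finally show ?thesis .
  qed
  show ?thesis unfolding Let_def
    using P1 P2 by (simp add: w_def lam_def w'_def smin_def c_def)
qed

end
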